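(* Let $K\subset\mathbb{R}^n$ be a proper cone, let $\|\cdot\|$ be a $K$-monotone norm on $\mathbb{R}^n$, and let $\mathcal{X}\subset\mathcal{P}_\mathbb{N}$ be compact with respect to the Hausdorff metric. Then there exists $0<C<\infty$ such that for every $\mathcal{M}\in\mathcal{X}$ there is a $K$-monotone norm $v$ which is extremal for $\mathcal{S}(\mathcal{M},\mathbb{N})$ and satisfies $\operatorname{ecc}_{\|\cdot\|}(v)<C$.
   Context: A proper cone $K\subset\mathbb{R}^n$ is a nonempty set with $rK\subset K$ for all $r>0$ which is convex, pointed, closed and has nonempty interior. Write $x\ge_K y$ if $x-y\in K$. A face of $K$ is a cone $F\subseteq K$ with: $x\in F$, $x\ge_K y\ge_K0$ imply $y\in F$; $\{0\},K$ are trivial. $\pi(K)=\{A: AK\subset K\}$; $A\in\pi(K)$ is $K$-irreducible if no nontrivial face $F$ has $AF\subset F$. $\mathcal{P}_\mathbb{N}$ is the set of nonempty compact $\mathcal{M}\subset\pi(K)$ such that $\operatorname{conv}\mathcal{M}$ contains a $K$-irreducible element, equipped with the Hausdorff metric $H(\mathcal{M},\mathcal{N})=\max\{\max_{A\in\mathcal{M}}\operatorname{dist}(A,\mathcal{N}),\max_{B\in\mathcal{N}}\operatorname{dist}(B,\mathcal{M})\}$ (for some fixed matrix norm). Discrete semigroup $\mathcal{S}(\mathcal{M},\mathbb{N})=\bigcup_{t\in\mathbb{N}}\mathcal{S}_t$, $\mathcal{S}_0=\{I\}$, $\mathcal{S}_t=\{A_{t-1}\cdots A_0:A_s\in\mathcal{M}\}$;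 joint spectral radius $\rho=\lim_{t\to\infty}\sup\{\|S\|:S\in\mathcal{S}_t\}^{1/t}$. A norm $v$ is extremal if $v(Sx)\le\rho^tv(x)$ for all $x$, $t$, $S\in\mathcal{S}_t$; $K$-monotone if $x\ge_K y\ge_K0$ implies $v(x)\ge v(y)$. Eccentricity: $\operatorname{ecc}_{\|\cdot\|}(v)=\max\{v(x):\|x\|=1\}/\min\{v(x):\|x\|=1\}$. *)

theory Defs
  imports "HOL-Analysis.Analysis"
begin

type_synonym 'n rvec = "real ^ 'n"
type_synonym 'n rmat = "real ^ 'n ^ 'n"

definition is_cone :: "('n::finite) rvec set \<Rightarrow> bool" where
  "is_cone F \<longleftrightarrow> F \<noteq> {} \<and> (\<forall>r>0. \<forall>x\<in>F. r *\<^sub>R x \<in> F)"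

definition proper_cone :: "('n::finite) rvec set \<Rightarrow> bool" where
  "proper_cone K \<longleftrightarrow> is_cone K \<and> convex K \<and> K \<inter> uminus ` K = {0}
     \<and> closed K \<and> interior K \<noteq> {}"

definition cone_ge :: "('n::finite) rvec set \<Rightarrow> 'n rvec \<Rightarrow> 'n rvec \<Rightarrow> bool" where
  "cone_ge K x y \<longleftrightarrow> x - y \<in> K"

definition is_face :: "('n::finite) rvec set \<Rightarrow> 'n rvec set \<Rightarrow> bool" where
  "is_face K F \<longleftrightarrow> is_cone F \<and> F \<subseteq> K \<and>
     (\<forall>x y. x \<in> F \<and> cone_ge K x y \<and> cone_ge K y 0 \<longrightarrow> y \<in> F)"

definition nontrivial_face :: "('n::finite) rvec set \<Rightarrow> 'n rvec set \<Rightarrow> bool" where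
  "nontrivial_face K F \<longleftrightarrow> is_face K F \<and> F \<noteq> {0} \<and> F \<noteq> K"

definition pi_cone :: "('n::finite) rvec set \<Rightarrow> 'n rmat set" where
  "pi_cone K = {A. \<forall>x\<in>K. A *v x \<in> K}"

definition K_irreducible :: "('n::finite) rvec set \<Rightarrow> 'n rmat \<Rightarrow> bool" where
  "K_irreducible K A \<longleftrightarrow> A \<in> pi_cone K \<and>
     \<not> (\<exists>F. nontrivial_face K F \<and> (\<forall>x\<in>F. A *v x \<in> F))"

definition P_N :: "('n::finite) rvec set \<Rightarrow> 'n rmat set set" where
  "P_N K = {M. M \<noteq> {} \<and> compact M \<and> M \<subseteq> pi_cone K \<and>
                (\<exists>A\<in>convex hull M. K_irreducible K A)}"

definition hausdorff_dist :: "('n::finite) rmat set \<Rightarrow> 'n rmat set \<Rightarrow> real" where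
  "hausdorff_dist M N = max (SUP A\<in>M. infdist A N) (SUP B\<in>N. infdist B M)"

text \<open>Compactness w.r.t. the Hausdorff metric, stated as sequential compactness
  (equivalent for metric spaces).\<close>
definition hausdorff_compact :: "('n::finite) rmat set set \<Rightarrow> bool" where
  "hausdorff_compact X \<longleftrightarrow> (\<forall>f. (\<forall>k. f k \<in> X) \<longrightarrow>
     (\<exists>l\<in>X. \<exists>r::nat\<Rightarrow>nat. strict_mono r \<and> (\<lambda>k. hausdorff_dist (f (r k)) l) \<longlonglongrightarrow> 0))"

fun prods :: "('n::finite) rmat set \<Rightarrow> nat \<Rightarrow> 'n rmat set" where
  "prods M 0 = {mat 1}"
| "prods M (Suc t) = {A ** S | A S. A \<in> M \<and> S \<in> prods M t}"

definition semigroup :: "('n::finite) rmat set \<Rightarrow> 'n rmat set" where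
  "semigroup M = (\<Union>t. prods M t)"

definition jsr :: "('n::finite) rmat set \<Rightarrow> real" where
  "jsr M = lim (\<lambda>t. (SUP S\<in>prods M t. norm S) powr (1 / real t))"

definition is_norm :: "(('n::finite) rvec \<Rightarrow> real) \<Rightarrow> bool" where
  "is_norm v \<longleftrightarrow> (\<forall>x. v x \<ge> 0) \<and> (\<forall>x. v x = 0 \<longleftrightarrow> x = 0) \<and>
     (\<forall>c x. v (c *\<^sub>R x) = \<bar>c\<bar> * v x) \<and> (\<forall>x y. v (x + y) \<le> v x + v y)"

definition K_monotone :: "('n::finite) rvec set \<Rightarrow> ('n rvec \<Rightarrow> real) \<Rightarrow> bool" where
  "K_monotone K v \<longleftrightarrow> (\<forall>x y. cone_ge K x y \<and> cone_ge K y 0 \<longrightarrow> v x \<ge> v y)"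

definition extremal :: "('n::finite) rmat set \<Rightarrow> ('n rvec \<Rightarrow> real) \<Rightarrow> bool" where
  "extremal M v \<longleftrightarrow> is_norm v \<and>
     (\<forall>x t S. S \<in> prods M t \<longrightarrow> v (S *v x) \<le> jsr M ^ t * v x)"

definition ecc :: "(('n::finite) rvec \<Rightarrow> real) \<Rightarrow> ('n rvec \<Rightarrow> real) \<Rightarrow> real" where
  "ecc N v = (SUP x\<in>{x. N x = 1}. v x) / (INF x\<in>{x. N x = 1}. v x)"

end

theory Submission
  imports Defs
begin


lemma norm_sq_vec: "norm (v::real^'n)^2 = (\<Sum>i\<in>UNIV. (v$i)^2)"
  by (simp only: power2_norm_eq_inner) (simp add: inner_vec_def power2_eq_square)

lemma norm_sq_mat: "norm (A::real^'n^'m)^2 = (\<Sum>i\<in>UNIV. norm (A$i)^2)"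
  by (simp add: power2_norm_eq_inner inner_vec_def)

lemma mv_row: "(A *v x) $ i = A$i \<bullet> (x::real^'n)"
  by (simp add: matrix_vector_mult_def inner_vec_def)

lemma norm_mv: "norm (A *v x) \<le> norm (A::real^'n^'m) * norm (x::real^'n)"
proof -
  have "norm (A *v x)^2 = (\<Sum>i\<in>UNIV. (A$i \<bullet> x)^2)"
    by (simp add: norm_sq_vec mv_row)
  also have "\<dots> \<le> (\<Sum>i\<in>UNIV. norm (A$i)^2 * norm x^2)"
  proof (rule sum_mono)
    fix i
    have "\<bar>A$i \<bullet> x\<bar> \<le> norm (A$i) * norm x" by (rule Cauchy_Schwarz_ineq2)
    hence "\<bar>A$i \<bullet> x\<bar>^2 \<le> (norm (A$i) * norm x)^2"
      by (intro power_mono) auto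
    thus "(A$i \<bullet> x)^2 \<le> norm (A$i)^2 * norm x^2" by (simp add: power_mult_distrib)
  qed
  also have "\<dots> = (norm A * norm x)^2"
    by (simp add: norm_sq_mat sum_distrib_right power_mult_distrib)
  finally show ?thesis
    by (rule power2_le_imp_le) simp
qed

lemma norm_transpose_mat: "norm (transpose (B::real^'n^'m)) = norm B"
proof -
  have "norm (transpose B)^2 = norm B^2"
    unfolding norm_sq_mat norm_sq_vec
    by (simp add: transpose_def) (rule sum.swap)
  thus ?thesis by (simp add: power2_eq_iff_nonneg)
qed

lemma mm_row: "((A::real^'n^'m) ** (B::real^'k^'n)) $ i = transpose B *v (A$i)"
  by (auto simp: matrix_matrix_mult_def matrix_vector_mult_def transpose_def vec_eq_iff mult.commute intro!: sum.cong)

lemma norm_mm: "norm (A ** B) \<le> norm (A::real^'n^'m) * norm (B::real^'k^'n)"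
proof -
  have "norm (A ** B)^2 = (\<Sum>i\<in>UNIV. norm (transpose B *v A$i)^2)"
    by (simp add: norm_sq_mat mm_row)
  also have "\<dots> \<le> (\<Sum>i\<in>UNIV. norm B^2 * norm (A$i)^2)"
  proof (rule sum_mono)
    fix i
    have "norm (transpose B *v A$i) \<le> norm B * norm (A$i)"
      using norm_mv[of "transpose B" "A$i"] by (simp add: norm_transpose_mat)
    hence "norm (transpose B *v A$i)^2 \<le> (norm B * norm (A$i))^2"
      by (intro power_mono) auto
    thus "norm (transpose B *v A$i)^2 \<le> norm B^2 * norm (A$i)^2" by (simp add: power_mult_distrib)
  qed
  also have "\<dots> = norm B^2 * norm A^2"
    by (simp add: norm_sq_mat sum_distrib_left)
  also have "\<dots> = (norm A * norm B)^2"
    by (simp add: power_mult_distrib)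
  finally show ?thesis
    by (rule power2_le_imp_le) simp
qed



locale cn =
  fixes K :: "('n::finite) rvec set" and N :: "'n rvec \<Rightarrow> real"
  assumes pc: "proper_cone K" and nN: "is_norm N" and mN: "K_monotone K N"
begin

lemma K0: "0 \<in> K"
  using pc unfolding proper_cone_def by (metis Int_iff singletonI)

lemma Kclosed: "closed K" using pc unfolding proper_cone_def by auto
lemma Kconvex: "convex K" using pc unfolding proper_cone_def by auto
lemma Kint: "interior K \<noteq> {}" using pc unfolding proper_cone_def by auto

lemma Kpos: "x \<in> K \<Longrightarrow> r > 0 \<Longrightarrow> r *\<^sub>R x \<in> K"
  using pc unfolding proper_cone_def is_cone_def by auto

lemma Kscale: "x \<in> K \<Longrightarrow> r \<ge> 0 \<Longrightarrow> r *\<^sub>R x \<in> K"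
  using Kpos K0 by (cases "r = 0") auto

lemma Kadd: "x \<in> K \<Longrightarrow> y \<in> K \<Longrightarrow> x + y \<in> K"
proof -
  assume a: "x \<in> K" "y \<in> K"
  have "(1/2::real) *\<^sub>R x + (1/2::real) *\<^sub>R y \<in> K"
    using Kconvex a unfolding convex_def by auto
  hence "2 *\<^sub>R ((1/2::real) *\<^sub>R x + (1/2::real) *\<^sub>R y) \<in> K" by (rule Kpos) auto
  thus ?thesis by (simp add: scaleR_add_right)
qed

lemma Kpointed: "x \<in> K \<Longrightarrow> -x \<in> K \<Longrightarrow> x = 0"
proof -
  assume "x \<in> K" "-x \<in> K"
  hence "x \<in> K \<inter> uminus ` K" by (metis IntI minus_minus rev_image_eqI)
  thus ?thesis using pc unfolding proper_cone_def by auto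
qed

lemma Ksum: "finite A \<Longrightarrow> (\<And>i. i \<in> A \<Longrightarrow> f i \<in> K) \<Longrightarrow> sum f A \<in> K"
  by (induction A rule: finite_induct) (auto simp: K0 Kadd)

lemma N_nonneg: "N x \<ge> 0" using nN unfolding is_norm_def by auto
lemma N_zero: "N x = 0 \<longleftrightarrow> x = 0" using nN unfolding is_norm_def by auto
lemma N_0[simp]: "N 0 = 0" using N_zero by auto
lemma N_scale: "N (c *\<^sub>R x) = \<bar>c\<bar> * N x" using nN unfolding is_norm_def by auto
lemma N_tri: "N (x + y) \<le> N x + N y" using nN unfolding is_norm_def by auto
lemma N_minus: "N (- x) = N x" using N_scale[of "-1" x] by simp
lemma N_diff_tri: "N (x - y) \<le> N x + N y" using N_tri[of x "-y"] N_minus[of y] by simp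
lemma N_rev: "N x - N y \<le> N (x - y)" using N_tri[of "x - y" y] by simp
lemma N_rev_abs: "\<bar>N x - N y\<bar> \<le> N (x - y)"
  using N_rev[of x y] N_rev[of y x] N_minus[of "x - y"] by (simp add: abs_le_iff)
lemma N_sum: "finite A \<Longrightarrow> N (sum f A) \<le> (\<Sum>i\<in>A. N (f i))"
  by (induction A rule: finite_induct) (auto intro: order_trans[OF N_tri])

lemma N_mono: "x - y \<in> K \<Longrightarrow> y \<in> K \<Longrightarrow> N y \<le> N x"
  using mN unfolding K_monotone_def cone_ge_def by auto

lemma N_upper: "\<exists>\<beta>>0. \<forall>x. N x \<le> \<beta> * norm x"
proof -
  define \<beta> where "\<beta> = 1 + (\<Sum>i\<in>(UNIV::'n set). N (axis i 1))"
  have b0: "\<beta> > 0" unfolding \<beta>_def using N_nonneg by (simp add: sum_nonneg add_pos_nonneg)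
  have "N x \<le> \<beta> * norm x" for x
  proof -
    have ex: "(\<Sum>i\<in>UNIV. x$i *\<^sub>R axis i 1) = x"
      using basis_expansion[of x] by (simp add: scalar_mult_eq_scaleR)
    have "N x \<le> (\<Sum>i\<in>UNIV. N (x$i *\<^sub>R axis i 1))" 
      using N_sum[of UNIV "\<lambda>i. x$i *\<^sub>R axis i 1"] by (simp add: ex)
    also have "\<dots> = (\<Sum>i\<in>UNIV. \<bar>x$i\<bar> * N (axis i 1))" by (simp add: N_scale)
    also have "\<dots> \<le> (\<Sum>i\<in>UNIV. norm x * N (axis i 1))"
      by (rule sum_mono, rule mult_right_mono) (auto simp: component_le_norm_cart N_nonneg)
    also have "\<dots> \<le> \<beta> * norm x" unfolding \<beta>_def by (simp add: sum_distrib_left algebra_simps)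
    finally show ?thesis .
  qed
  thus ?thesis using b0 by blast
qed

lemma N_cont: "continuous_on A N"
proof -
  obtain \<beta> where b: "\<beta> > 0" "\<And>x. N x \<le> \<beta> * norm x" using N_upper by blast
  show ?thesis unfolding continuous_on_iff
  proof (intro ballI allI impI)
    fix x e :: real assume "e > 0" 
    fix x0 assume "x0 \<in> A"
    show "\<exists>d>0. \<forall>x'\<in>A. dist x' x0 < d \<longrightarrow> dist (N x') (N x0) < e"
    proof (intro exI[of _ "e / \<beta>"] conjI ballI impI)
      show "e / \<beta> > 0" using \<open>e>0\<close> b by simp
      fix x' assume "dist x' x0 < e / \<beta>"
      hence "\<beta> * norm (x' - x0) < e" using b by (simp add: dist_norm field_simps)
      moreover have "dist (N x') (N x0) \<le> N (x' - x0)" using N_rev_abs by (simp add: dist_real_def)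
      ultimately show "dist (N x') (N x0) < e" using b(2)[of "x' - x0"] by linarith
    qed
  qed
qed

lemma N_lower: "\<exists>\<alpha>>0. \<forall>x. \<alpha> * norm x \<le> N x"
proof -
  have c: "compact (sphere (0::'n rvec) 1)" by simp
  have ne: "sphere (0::'n rvec) 1 \<noteq> {}"
    using sphere_eq_empty[of "0::'n rvec" 1] by simp
  obtain x0 where x0: "x0 \<in> sphere 0 1" "\<And>y. y \<in> sphere 0 1 \<Longrightarrow> N x0 \<le> N y"
    using continuous_attains_inf[OF c ne N_cont] by blast
  have "x0 \<noteq> 0" using x0(1) by auto
  hence a: "N x0 > 0" using N_zero[of x0] N_nonneg[of x0] by linarith
  have "N x0 * norm x \<le> N x" for x
  proof (cases "x = 0")
    case True thus ?thesis by simp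
  next
    case False
    have "(1 / norm x) *\<^sub>R x \<in> sphere 0 1" using False by (simp add: sphere_def)
    hence "N x0 \<le> N ((1 / norm x) *\<^sub>R x)" by (rule x0(2))
    also have "\<dots> = N x / norm x" by (simp add: N_scale)
    finally show ?thesis using False by (simp add: field_simps)
  qed
  thus ?thesis using a by blast
qed

end

locale cnf = cn K N for K :: "('n::finite) rvec set" and N +
  fixes e :: "'n rvec" and r0 \<alpha> \<beta> :: real
  assumes r0: "r0 > 0" and ball_e: "cball e r0 \<subseteq> K"
    and alpha: "\<alpha> > 0" "\<And>x. \<alpha> * norm x \<le> N x"
    and beta: "\<beta> > 0" "\<And>x. N x \<le> \<beta> * norm x"
begin

lemma eK: "e \<in> K" using ball_e r0 by auto

lemma dom_e: "(norm y / r0) *\<^sub>R e - y \<in> K \<and> (norm y / r0) *\<^sub>R e + y \<in> K"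
proof (cases "y = 0")
  case True thus ?thesis using K0 by simp
next
  case False
  let ?z = "(r0 / norm y) *\<^sub>R y"
  have nz: "norm ?z = r0" using False r0 by simp
  have "e - ?z \<in> K" "e + ?z \<in> K" using ball_e nz by (auto simp: dist_norm)
  hence "(norm y / r0) *\<^sub>R (e - ?z) \<in> K" "(norm y / r0) *\<^sub>R (e + ?z) \<in> K"
    using r0 by (auto intro!: Kscale)
  thus ?thesis using False r0 by (simp add: algebra_simps)
qed

lemma dom_eN: "(N y / (\<alpha> * r0)) *\<^sub>R e - y \<in> K \<and> (N y / (\<alpha> * r0)) *\<^sub>R e + y \<in> K"
proof -
  define a where "a = norm y / r0"
  define b where "b = N y / (\<alpha> * r0)"
  have "a = (\<alpha> * norm y) / (\<alpha> * r0)" unfolding a_def using alpha(1) by simp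
  also have "\<dots> \<le> b" unfolding b_def using alpha r0 by (intro divide_right_mono) auto
  finally have le: "a \<le> b" .
  have k1: "(b - a) *\<^sub>R e \<in> K" using le eK by (intro Kscale) auto
  have k2: "a *\<^sub>R e - y \<in> K" "a *\<^sub>R e + y \<in> K" using dom_e[of y] unfolding a_def by auto
  have "(b - a) *\<^sub>R e + (a *\<^sub>R e - y) \<in> K" using Kadd[OF k1 k2(1)] .
  moreover have "(b - a) *\<^sub>R e + (a *\<^sub>R e + y) \<in> K" using Kadd[OF k1 k2(2)] .
  ultimately have "b *\<^sub>R e - y \<in> K \<and> b *\<^sub>R e + y \<in> K" by (simp add: algebra_simps)
  thus ?thesis unfolding b_def .
qed

lemma Ne_pos: "N e > 0"
proof -
  have "e \<noteq> 0"
  proof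
    assume e0: "e = 0"
    obtain i :: 'n where True by simp
    let ?z = "r0 *\<^sub>R (axis i 1 :: 'n rvec)"
    have nz: "norm ?z = r0" using r0 by simp
    hence "?z \<in> K" "-?z \<in> K" using ball_e e0 by (auto simp: dist_norm)
    hence "?z = 0" by (rule Kpointed)
    thus False using r0 by (simp add: axis_eq_0_iff)
  qed
  thus ?thesis using N_zero[of e] N_nonneg[of e] by linarith
qed

end


lemma fekete_bound:
  fixes g :: "nat \<Rightarrow> real"
  assumes g0: "\<And>t. g t \<ge> 0" and sub: "\<And>s t. g (s + t) \<le> g s * g t"
    and t0: "t0 \<ge> 1" and p: "p > 0" and gt0: "g t0 \<le> p ^ t0"
  shows "\<exists>G>0. \<forall>t. g t \<le> G * p ^ t"
proof -
  define G where "G = 1 + (\<Sum>r<t0. g r / p ^ r)"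
  have Gpos: "G > 0" unfolding G_def using g0 p by (auto intro!: add_pos_nonneg sum_nonneg)
  have "g t \<le> G * p ^ t" for t
  proof (induction t rule: less_induct)
    case (less t)
    show ?case
    proof (cases "t < t0")
      case True
      have "g t / p ^ t \<le> (\<Sum>r<t0. g r / p ^ r)"
        using True g0 p by (intro member_le_sum) auto
      hence "g t / p ^ t \<le> G" unfolding G_def by linarith
      thus ?thesis using p by (simp add: divide_le_eq)
    next
      case False
      hence "t = t0 + (t - t0)" by simp
      hence "g t \<le> g t0 * g (t - t0)" using sub by metis
      also have "\<dots> \<le> p ^ t0 * (G * p ^ (t - t0))"
        using less.IH[of "t - t0"] t0 False gt0 g0 p by (intro mult_mono) auto
      also have "\<dots> = G * p ^ t" using False by (simp add: power_add[symmetric] algebra_simps)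
      finally show ?thesis .
    qed
  qed
  thus ?thesis using Gpos by blast
qed

lemma fekete:
  fixes g :: "nat \<Rightarrow> real"
  assumes g0: "\<And>t. g t \<ge> 0" and sub: "\<And>s t. g (s + t) \<le> g s * g t"
  shows "(\<lambda>t. g t powr (1 / real t)) \<longlonglongrightarrow> Inf ((\<lambda>t. g t powr (1 / real t)) ` {1..})"
proof -
  define h where "h t = g t powr (1 / real t)" for t
  define L where "L = Inf (h ` {1..})"
  have hnn: "h t \<ge> 0" for t unfolding h_def by simp
  have bdd: "bdd_below (h ` {1..})" using hnn by (intro bdd_belowI[of _ 0]) auto
  have Lle: "L \<le> h t" if "t \<ge> 1" for t unfolding L_def using bdd that by (intro cInf_lower) auto
  have ev_up: "eventually (\<lambda>t. h t < a) sequentially" if "a > L" for a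
  proof -
    define \<epsilon> where "\<epsilon> = a - L"
    have ep: "\<epsilon> > 0" using that unfolding \<epsilon>_def by simp
    have "Inf (h ` {1..}) < L + \<epsilon>/2" unfolding L_def using ep by simp
    then obtain t0 where t0: "t0 \<ge> 1" "h t0 < L + \<epsilon>/2"
      using cInf_less_iff[of "h ` {1..}" "L + \<epsilon>/2"] bdd by auto
    define p where "p = L + \<epsilon>/2"
    have Lnn: "L \<ge> 0" unfolding L_def by (rule cInf_greatest) (auto simp: hnn)
    have p0: "p > 0" using Lnn ep unfolding p_def by linarith
    have gt0: "g t0 \<le> p ^ t0"
    proof (cases "g t0 = 0")
      case True thus ?thesis using p0 by simp
    next
      case False
      have "g t0 = (h t0) powr (real t0)" unfolding h_def using t0(1) g0[of t0]
        by (simp add: powr_powr powr_one)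
      also have "\<dots> < p powr (real t0)" using t0 hnn p_def by (intro powr_less_mono2) auto
      also have "\<dots> = p ^ t0" using p0 by (simp add: powr_realpow)
      finally show ?thesis by simp
    qed
    obtain G where G: "G > 0" "\<And>t. g t \<le> G * p ^ t"
      using fekete_bound[OF g0 sub t0(1) p0 gt0] by blast
    have lim: "(\<lambda>t. G powr (1 / real t) * p) \<longlonglongrightarrow> G powr 0 * p"
      by (intro tendsto_intros tendsto_powr lim_1_over_n) (use G in auto)
    have pa: "p < a" unfolding p_def \<epsilon>_def using that by (simp add: field_simps)
    have "G powr 0 * p < a" using G pa by simp
    hence "eventually (\<lambda>t. G powr (1 / real t) * p < a) sequentially"
      by (rule order_tendstoD(2)[OF lim])
    moreover have "eventually (\<lambda>t. t \<ge> 1) sequentially" by (rule eventually_ge_at_top)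
    ultimately show ?thesis
    proof eventually_elim
      case (elim t)
      have "h t \<le> (G * p ^ t) powr (1 / real t)" unfolding h_def
        using G(2)[of t] g0[of t] by (intro powr_mono2) auto
      also have "\<dots> = G powr (1 / real t) * p"
        using G p0 elim by (simp add: powr_mult powr_realpow[symmetric] powr_powr)
      finally show ?case using elim by simp
    qed
  qed
  have ev_low: "eventually (\<lambda>t. a < h t) sequentially" if "a < L" for a
    using eventually_ge_at_top[of 1] by eventually_elim (use Lle that in force)
  have "h \<longlonglongrightarrow> L" by (rule order_tendstoI) (use ev_low ev_up in auto)
  thus ?thesis unfolding h_def L_def .
qed

lemma prods_split: "S \<in> prods M (a + b) \<Longrightarrow> \<exists>P\<in>prods M a. \<exists>Q\<in>prods M b. S = P ** Q"
proof (induction a arbitrary: S)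
  case 0 thus ?case by force
next
  case (Suc a)
  then obtain A S' where A: "A \<in> M" "S' \<in> prods M (a + b)" "S = A ** S'" by auto
  then obtain P Q where PQ: "P \<in> prods M a" "Q \<in> prods M b" "S' = P ** Q" using Suc.IH by blast
  have "A ** P \<in> prods M (Suc a)" using A PQ by auto
  moreover have "S = (A ** P) ** Q" using A PQ by (simp add: matrix_mul_assoc)
  ultimately show ?case using PQ by blast
qed

lemma prods_mult: "P \<in> prods M a \<Longrightarrow> Q \<in> prods M b \<Longrightarrow> P ** Q \<in> prods M (a + b)"
proof (induction a arbitrary: P)
  case 0 thus ?case by simp
next
  case (Suc a)
  then obtain A S where A: "A \<in> M" "S \<in> prods M a" "P = A ** S" by auto
  hence "S ** Q \<in> prods M (a + b)" using Suc by blast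
  thus ?case using A by (auto simp: matrix_mul_assoc[symmetric])
qed

lemma prods_ne: "M \<noteq> {} \<Longrightarrow> prods M t \<noteq> {}"
  by (induction t) auto

lemma prods_1: "prods M 1 = M"
  by auto

lemma prods_norm:
  fixes M :: "('n::finite) rmat set"
  assumes "\<And>A. A \<in> M \<Longrightarrow> norm A \<le> R" "S \<in> prods M t"
  shows "norm S \<le> norm (mat 1 :: 'n::finite rmat) * R ^ t"
  using assms(2)
proof (induction t arbitrary: S)
  case 0 thus ?case by simp
next
  case (Suc t)
  then obtain A S' where A: "A \<in> M" "S' \<in> prods M t" "S = A ** S'" by auto
  have R0: "R \<ge> 0" using assms(1)[OF A(1)] norm_ge_zero order_trans by blast
  have "norm S \<le> norm A * norm S'" using A norm_mm by blast
  also have "\<dots> \<le> R * (norm (mat 1 :: 'n rmat) * R ^ t)"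
    using assms(1)[OF A(1)] Suc.IH[OF A(2)] R0 by (intro mult_mono) auto
  finally show ?case by (simp add: algebra_simps)
qed

lemma pi_mult: "A \<in> pi_cone K \<Longrightarrow> B \<in> pi_cone K \<Longrightarrow> A ** B \<in> pi_cone K"
  by (simp add: pi_cone_def matrix_vector_mul_assoc[symmetric])

lemma prods_pi: "M \<subseteq> pi_cone K \<Longrightarrow> S \<in> prods M t \<Longrightarrow> S \<in> pi_cone K"
proof (induction t arbitrary: S)
  case 0 thus ?case by (simp add: pi_cone_def)
next
  case (Suc t) thus ?case by (auto intro!: pi_mult)
qed

definition Fs :: "('n::finite) rmat set \<Rightarrow> nat \<Rightarrow> real" where
  "Fs M t = (SUP S\<in>prods M t. norm S)"

lemma jsr_Fs: "jsr M = lim (\<lambda>t. Fs M t powr (1 / real t))"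
  unfolding jsr_def Fs_def ..

locale bset =
  fixes M :: "('n::finite) rmat set" and R :: real
  assumes Mne: "M \<noteq> {}" and Mb: "\<And>A. A \<in> M \<Longrightarrow> norm A \<le> R"
begin

lemma bdd: "bdd_above (norm ` prods M t)"
  using prods_norm[OF Mb] by (intro bdd_aboveI2) auto

lemma le_Fs: "S \<in> prods M t \<Longrightarrow> norm S \<le> Fs M t"
  unfolding Fs_def using bdd by (intro cSUP_upper) auto

lemma Fs_nonneg: "Fs M t \<ge> 0"
proof -
  obtain S where "S \<in> prods M t" using prods_ne[OF Mne] by blast
  thus ?thesis using le_Fs[of S t] norm_ge_zero order_trans by blast
qed

lemma Fs_sub: "Fs M (s + t) \<le> Fs M s * Fs M t"
  unfolding Fs_def[of M "s+t"]
proof (rule cSUP_least)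
  show "prods M (s + t) \<noteq> {}" using prods_ne[OF Mne] .
  fix S assume "S \<in> prods M (s + t)"
  then obtain P Q where PQ: "P \<in> prods M s" "Q \<in> prods M t" "S = P ** Q"
    using prods_split by blast
  have "norm S \<le> norm P * norm Q" using PQ norm_mm by blast
  also have "\<dots> \<le> Fs M s * Fs M t" using PQ le_Fs by (intro mult_mono) (auto simp: Fs_nonneg)
  finally show "norm S \<le> Fs M s * Fs M t" .
qed

lemma jsr_lim: "(\<lambda>t. Fs M t powr (1 / real t)) \<longlonglongrightarrow> jsr M"
  and jsr_inf: "jsr M = Inf ((\<lambda>t. Fs M t powr (1 / real t)) ` {1..})"
proof -
  have l: "(\<lambda>t. Fs M t powr (1 / real t)) \<longlonglongrightarrow> Inf ((\<lambda>t. Fs M t powr (1 / real t)) ` {1..})"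
    by (rule fekete) (auto simp: Fs_nonneg Fs_sub)
  thus "jsr M = Inf ((\<lambda>t. Fs M t powr (1 / real t)) ` {1..})" unfolding jsr_Fs by (rule limI)
  thus "(\<lambda>t. Fs M t powr (1 / real t)) \<longlonglongrightarrow> jsr M" using l by simp
qed

lemma jsr_nonneg: "jsr M \<ge> 0"
  unfolding jsr_inf by (rule cInf_greatest) auto

lemma jsr_le: "jsr M \<le> R"
proof -
  have mem: "Fs M 1 powr (1 / real 1) \<in> (\<lambda>t. Fs M t powr (1 / real t)) ` {1..}"
    by (rule imageI) simp
  have "jsr M \<le> Fs M 1 powr (1 / real 1)" unfolding jsr_inf
    by (rule cInf_lower[OF mem]) (auto intro!: bdd_belowI[of _ 0])
  also have "\<dots> = Fs M 1" using Fs_nonneg by (simp add: powr_one)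
  also have "\<dots> \<le> R" unfolding Fs_def prods_1 using Mne Mb by (intro cSUP_least) auto
  finally show ?thesis .
qed

lemma jsr_eventually:
  assumes "q > jsr M"
  shows "\<exists>T0. \<forall>t\<ge>T0. \<forall>S\<in>prods M t. norm S \<le> q ^ t"
proof -
  have "eventually (\<lambda>t. Fs M t powr (1 / real t) < q) sequentially"
    using order_tendstoD(2)[OF jsr_lim assms] .
  moreover have "eventually (\<lambda>t. t \<ge> 1) sequentially" by (rule eventually_ge_at_top)
  ultimately have "eventually (\<lambda>t. \<forall>S\<in>prods M t. norm S \<le> q ^ t) sequentially"
  proof eventually_elim
    case (elim t)
    have q0: "q > 0" using assms jsr_nonneg by linarith
    have "Fs M t = (Fs M t powr (1 / real t)) powr (real t)"
      using elim Fs_nonneg[of t] by (simp add: powr_powr powr_one)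
    also have "\<dots> \<le> q powr (real t)" using elim by (intro powr_mono2) auto
    also have "\<dots> = q ^ t" using q0 by (simp add: powr_realpow)
    finally show ?case using le_Fs order_trans by blast
  qed
  thus ?thesis unfolding eventually_sequentially by blast
qed

end



lemma pow_unbounded:
  fixes y z :: real
  assumes "z > 0" "y > z" 
  shows "\<exists>k\<ge>T0. C < (y / z) ^ k"
proof -
  have x1: "y / z > 1" using assms by simp
  obtain n where n: "C < (y / z) ^ n" using real_arch_pow[OF x1] by blast
  have "(y / z) ^ n \<le> (y / z) ^ (n + T0)" using x1 by (intro power_increasing) auto
  thus ?thesis using n by (intro exI[of _ "n + T0"]) auto
qed

lemma pow_compare:
  fixes y z c :: real
  assumes z: "z > 0" and y: "y \<ge> 0" and ev: "\<And>k. k \<ge> T0 \<Longrightarrow> y ^ k \<le> c * z ^ k"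
  shows "y \<le> z"
proof (rule ccontr)
  assume "\<not> y \<le> z"
  hence yz: "y > z" by simp
  obtain k where k: "k \<ge> T0" "c < (y / z) ^ k" using pow_unbounded[OF z yz] by blast
  have "y ^ k \<le> c * z ^ k" using ev k by blast
  hence "(y / z) ^ k \<le> c" using z by (simp add: power_divide divide_le_eq)
  thus False using k by simp
qed

context cnf
begin

lemma pi_K: "A \<in> pi_cone K \<Longrightarrow> x \<in> K \<Longrightarrow> A *v x \<in> K"
  by (simp add: pi_cone_def)

lemma pi_mono: "A \<in> pi_cone K \<Longrightarrow> x - y \<in> K \<Longrightarrow> A *v x - A *v y \<in> K"
  by (simp add: pi_cone_def matrix_vector_mult_diff_distrib[symmetric])

lemma N_mat: "N (A *v e) \<le> \<beta> * norm e * norm A"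
proof -
  have "N (A *v e) \<le> \<beta> * norm (A *v e)" by (rule beta)
  also have "\<dots> \<le> \<beta> * (norm A * norm e)" using beta(1) norm_mv by (intro mult_left_mono) auto
  finally show ?thesis by (simp add: algebra_simps)
qed

lemma core:
  assumes Mpi: "M \<subseteq> pi_cone K" and bs: "bset M R"
    and d: "\<delta> > 0" and W: "W > 0"
    and cert: "\<And>y t U. y \<in> K \<Longrightarrow> U \<in> prods M t \<Longrightarrow>
        \<exists>j\<le>m. \<exists>S\<in>prods M j. \<delta> * N y * N (U *v e) \<le> W * N (U *v (S *v y))"
    and T: "T \<in> prods M t0"
  shows "N (T *v e) \<le> max (N e) ((W / \<delta>) * max 1 (jsr M ^ m)) * jsr M ^ t0"
proof (cases "t0 = 0")
  case True thus ?thesis using T by simp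
next
  case False
  interpret bset M R by (rule bs)
  define \<rho> where "\<rho> = jsr M"
  have \<rho>0: "\<rho> \<ge> 0" unfolding \<rho>_def by (rule jsr_nonneg)
  define f where "f q = (W / \<delta>) * max 1 (q ^ m) * q ^ t0" for q :: real
  have key: "N (T *v e) \<le> f q" if q: "q > \<rho>" for q
  proof -
    have q0: "q > 0" using q \<rho>0 by linarith
    obtain T0 where T0: "\<And>t S. t \<ge> T0 \<Longrightarrow> S \<in> prods M t \<Longrightarrow> norm S \<le> q ^ t"
      using jsr_eventually[of q] q unfolding \<rho>_def by blast
    define y where "y = \<delta> / W * N (T *v e)"
    have y0: "y \<ge> 0" unfolding y_def using d W N_nonneg by simp
    have seq: "\<exists>\<tau> P. P \<in> prods M \<tau> \<and> k * t0 \<le> \<tau> \<and> \<tau> \<le> k * (t0 + m) \<and> y ^ k * N e \<le> N (P *v e)" for k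
    proof (induction k)
      case 0 thus ?case by (intro exI[of _ 0] exI[of _ "mat 1"]) auto
    next
      case (Suc k)
      then obtain \<tau> P where P: "P \<in> prods M \<tau>" "k * t0 \<le> \<tau>" "\<tau> \<le> k * (t0 + m)"
        "y ^ k * N e \<le> N (P *v e)" by blast
      have yK: "P *v e \<in> K" using prods_pi[OF Mpi P(1)] eK by (rule pi_K)
      obtain j S where S: "j \<le> m" "S \<in> prods M j"
        "\<delta> * N (P *v e) * N (T *v e) \<le> W * N (T *v (S *v (P *v e)))"
        using cert[OF yK T] by blast
      define P' where "P' = T ** (S ** P)"
      have P'm: "P' \<in> prods M (t0 + (j + \<tau>))" unfolding P'_def
        by (intro prods_mult T S P)
      have P'e: "P' *v e = T *v (S *v (P *v e))" unfolding P'_def by (simp add: matrix_vector_mul_assoc)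
      have "y ^ Suc k * N e = y * (y ^ k * N e)" by simp
      also have "\<dots> \<le> y * N (P *v e)" using P(4) y0 by (rule mult_left_mono)
      also have "\<dots> = (\<delta> * N (P *v e) * N (T *v e)) / W" unfolding y_def by simp
      also have "\<dots> \<le> N (P' *v e)" using S(3) W unfolding P'e by (simp add: divide_le_eq mult.commute)
      finally have "y ^ Suc k * N e \<le> N (P' *v e)" .
      moreover have "Suc k * t0 \<le> t0 + (j + \<tau>)" "t0 + (j + \<tau>) \<le> Suc k * (t0 + m)" using P S by auto
      ultimately show ?case using P'm by blast
    qed
    define z where "z = q ^ t0 * max 1 (q ^ m)"
    have z0: "z > 0" unfolding z_def using q0 by simp
    have "y ^ k \<le> (\<beta> * norm e / N e) * z ^ k" if k: "k \<ge> T0" for k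
    proof -
      obtain \<tau> P where P: "P \<in> prods M \<tau>" "k * t0 \<le> \<tau>" "\<tau> \<le> k * (t0 + m)"
        "y ^ k * N e \<le> N (P *v e)" using seq by blast
      have "k \<le> k * t0" using False by (cases t0) auto
      hence "\<tau> \<ge> T0" using P(2) k by linarith
      hence nP: "norm P \<le> q ^ \<tau>" using T0 P(1) by blast
      have qt: "q ^ \<tau> \<le> z ^ k"
      proof (cases "q \<ge> 1")
        case True
        have "q ^ \<tau> \<le> q ^ (k * (t0 + m))" using True P(3) by (intro power_increasing)
        also have "\<dots> = (q ^ t0 * q ^ m) ^ k" by (simp only: mult.commute[of k] power_mult power_add)
        also have "\<dots> = z ^ k" unfolding z_def using True by simp
        finally show ?thesis .
      next
        case False
        have "q ^ \<tau> \<le> q ^ (k * t0)" using False q0 P(2) by (intro power_decreasing) auto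
        also have "\<dots> = (q ^ t0) ^ k" by (simp only: mult.commute[of k] power_mult)
        also have "\<dots> \<le> z ^ k" unfolding z_def using q0
          by (intro power_mono) (auto intro: mult_left_mono[of 1, simplified])
        finally show ?thesis .
      qed
      have "y ^ k * N e \<le> \<beta> * norm e * norm P" using P(4) N_mat[of P] by linarith
      also have "\<dots> \<le> \<beta> * norm e * z ^ k" using nP qt beta(1) by (intro mult_left_mono) auto
      finally show ?thesis using Ne_pos by (simp add: field_simps)
    qed
    hence "y \<le> z" by (intro pow_compare[OF z0 y0])
    thus ?thesis unfolding y_def z_def f_def using d W by (simp add: field_simps)
  qed
  have lim: "(f \<longlongrightarrow> f \<rho>) (at_right \<rho>)" unfolding f_def
    by (intro tendsto_intros)
  have ev: "eventually (\<lambda>q. N (T *v e) \<le> f q) (at_right \<rho>)"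
    by (rule eventually_at_right_less[THEN eventually_mono]) (rule key)
  have "N (T *v e) \<le> f \<rho>" by (rule tendsto_lowerbound[OF lim ev]) simp
  also have "\<dots> \<le> max (N e) ((W / \<delta>) * max 1 (\<rho> ^ m)) * \<rho> ^ t0"
    unfolding f_def using \<rho>0 by (intro mult_right_mono) auto
  finally show ?thesis unfolding \<rho>_def .
qed

end


lemma mv_add_l: "(A + B) *v x = A *v x + B *v (x::real^'n)"
  by (simp add: matrix_vector_mult_def vec_eq_iff algebra_simps sum.distrib)
lemma mv_diff_l: "(A - B) *v x = A *v x - B *v (x::real^'n)"
  by (simp add: matrix_vector_mult_def vec_eq_iff algebra_simps sum_subtractf)
lemma mv_add_r: "A *v (x + y) = A *v x + A *v (y::real^'n)"
  by (simp add: matrix_vector_mult_def vec_eq_iff algebra_simps sum.distrib)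
lemma mv_diff_r: "A *v (x - y) = A *v x - A *v (y::real^'n)"
  by (simp add: matrix_vector_mult_def vec_eq_iff algebra_simps sum_subtractf)
lemma mv_scale_l: "(c *\<^sub>R A) *v x = c *\<^sub>R (A *v (x::real^'n))"
  by (simp add: matrix_vector_mult_def vec_eq_iff sum_distrib_left algebra_simps)
lemma mv_scale_r: "A *v (c *\<^sub>R x) = c *\<^sub>R (A *v (x::real^'n))"
  by (simp add: matrix_vector_mult_def vec_eq_iff sum_distrib_left algebra_simps)
lemma mv_sum_l: "finite S \<Longrightarrow> (sum f S) *v x = (\<Sum>i\<in>S. f i *v (x::real^'n))"
  by (induction S rule: finite_induct) (auto simp: mv_add_l)
lemma mv_sum_r: "finite S \<Longrightarrow> A *v (sum f S) = (\<Sum>i\<in>S. A *v (f i::real^'n))"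
  by (induction S rule: finite_induct) (auto simp: mv_add_r)
lemma mm_add_r: "(A::real^'n^'n) ** (B + C) = A ** B + A ** C"
  by (simp add: matrix_matrix_mult_def vec_eq_iff algebra_simps sum.distrib)

fun pw :: "('n::finite) rmat \<Rightarrow> nat \<Rightarrow> 'n rmat" where
  "pw Q 0 = mat 1"
| "pw Q (Suc j) = Q ** pw Q j"

definition psum :: "('n::finite) rmat \<Rightarrow> nat \<Rightarrow> 'n rmat" where
  "psum Q m = (\<Sum>j<m. pw Q j)"

lemma psum_Suc: "psum A (Suc m) = mat 1 + A ** psum A m"
proof (induction m)
  case 0 thus ?case by (simp add: psum_def)
next
  case (Suc m)
  have "psum A (Suc (Suc m)) = psum A (Suc m) + pw A (Suc m)" by (simp add: psum_def)
  also have "\<dots> = mat 1 + A ** psum A m + A ** pw A m" using Suc by simp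
  also have "\<dots> = mat 1 + A ** (psum A m + pw A m)" by (simp add: mm_add_r)
  also have "psum A m + pw A m = psum A (Suc m)" by (simp add: psum_def)
  finally show ?case .
qed

context cnf
begin

lemma pw_K: "A \<in> pi_cone K \<Longrightarrow> x \<in> K \<Longrightarrow> pw A j *v x \<in> K"
  by (induction j) (auto simp: pi_K matrix_vector_mul_assoc[symmetric])

lemma psum_K: "A \<in> pi_cone K \<Longrightarrow> x \<in> K \<Longrightarrow> psum A m *v x \<in> K"
  unfolding psum_def by (simp add: mv_sum_l Ksum pw_K)

lemma psum_mono_m: 
  assumes "A \<in> pi_cone K" "x \<in> K" "m1 \<le> m2"
  shows "psum A m2 *v x - psum A m1 *v x \<in> K"
proof -
  have "psum A m2 *v x - psum A m1 *v x = (\<Sum>j\<in>{m1..<m2}. pw A j *v x)"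
    using assms(3) unfolding psum_def mv_sum_l[OF finite_lessThan]
    by (simp add: sum_diff_nat_ivl lessThan_atLeast0)
  thus ?thesis using assms by (simp add: Ksum pw_K)
qed

lemma int_shift: "z \<in> K \<Longrightarrow> z + e \<in> interior K"
proof -
  assume z: "z \<in> K"
  have "ball (z + e) r0 \<subseteq> K"
  proof
    fix w assume "w \<in> ball (z + e) r0"
    hence "w - z \<in> cball e r0" by (auto simp: dist_norm algebra_simps)
    hence "w - z \<in> K" using ball_e by blast
    hence "z + (w - z) \<in> K" using Kadd z by blast
    thus "w \<in> K" by simp
  qed
  thus ?thesis using r0 by (meson centre_in_ball interior_maximal open_ball subsetD)
qed

lemma cone_trans: "x - y \<in> K \<Longrightarrow> y - z \<in> K \<Longrightarrow> x - z \<in> K"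
  using Kadd[of "x - y" "y - z"] by simp

lemma irr_orbit:
  assumes irr: "K_irreducible K A" and x: "x \<in> K" "x \<noteq> 0"
  shows "\<exists>c\<ge>0. \<exists>m. c *\<^sub>R (psum A m *v x) - 2 *\<^sub>R e \<in> K"
proof -
  have Api: "A \<in> pi_cone K" using irr unfolding K_irreducible_def by auto
  define F where "F = {y. y \<in> K \<and> (\<exists>c\<ge>0. \<exists>m. c *\<^sub>R (psum A m *v x) - y \<in> K)}"
  have face: "is_face K F"
    unfolding is_face_def is_cone_def
  proof (intro conjI allI impI ballI)
    show "F \<noteq> {}" unfolding F_def using K0 by (intro ex_in_conv[THEN iffD1] exI[of _ 0]) (auto intro!: exI[of _ 0])
    show "F \<subseteq> K" unfolding F_def by auto
  next
    fix r :: real and y assume r: "r > 0" and y: "y \<in> F"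
    then obtain c m where c: "y \<in> K" "c \<ge> 0" "c *\<^sub>R (psum A m *v x) - y \<in> K" unfolding F_def by auto
    have "r *\<^sub>R (c *\<^sub>R (psum A m *v x) - y) \<in> K" using c r by (intro Kscale) auto
    hence "(r * c) *\<^sub>R (psum A m *v x) - r *\<^sub>R y \<in> K" by (simp add: algebra_simps)
    thus "r *\<^sub>R y \<in> F" unfolding F_def using c r Kscale by (auto intro!: exI[of _ "r * c"] mult_nonneg_nonneg)
  next
    fix y z assume a: "y \<in> F \<and> cone_ge K y z \<and> cone_ge K z 0"
    then obtain c m where c: "c \<ge> 0" "c *\<^sub>R (psum A m *v x) - y \<in> K" unfolding F_def by auto
    have "c *\<^sub>R (psum A m *v x) - z \<in> K" using cone_trans[OF c(2)] a unfolding cone_ge_def by blast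
    thus "z \<in> F" using a c unfolding F_def cone_ge_def by auto
  qed
  have inv: "\<forall>y\<in>F. A *v y \<in> F"
  proof
    fix y assume "y \<in> F"
    then obtain c m where c: "y \<in> K" "c \<ge> 0" "c *\<^sub>R (psum A m *v x) - y \<in> K" unfolding F_def by auto
    have "A *v (c *\<^sub>R (psum A m *v x) - y) \<in> K" using pi_K[OF Api c(3)] .
    hence "c *\<^sub>R x + A *v (c *\<^sub>R (psum A m *v x) - y) \<in> K" using Kadd Kscale x c by blast
    moreover have "c *\<^sub>R x + A *v (c *\<^sub>R (psum A m *v x) - y) = c *\<^sub>R (psum A (Suc m) *v x) - A *v y"
      by (simp add: psum_Suc mv_add_l mv_diff_r mv_scale_r matrix_vector_mul_assoc algebra_simps)
    ultimately have "c *\<^sub>R (psum A (Suc m) *v x) - A *v y \<in> K" by simp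
    thus "A *v y \<in> F" unfolding F_def using pi_K[OF Api c(1)] c(2) by blast
  qed
  have xF: "x \<in> F" unfolding F_def using x K0
    by (auto intro!: exI[of _ 1] exI[of _ 1] simp: psum_def)
  have "F = K"
  proof (rule ccontr)
    assume "F \<noteq> K"
    moreover have "F \<noteq> {0}" using xF x by auto
    ultimately have "nontrivial_face K F" using face unfolding nontrivial_face_def by auto
    thus False using irr inv unfolding K_irreducible_def by blast
  qed
  hence "2 *\<^sub>R e \<in> F" using eK Kscale by auto
  thus ?thesis unfolding F_def by auto
qed

end


context cnf
begin

lemma Bs_compact: "compact {x\<in>K. N x = 1}"
proof (rule compact_eq_bounded_closed[THEN iffD2], rule conjI)
  show "bounded {x\<in>K. N x = 1}"
    unfolding bounded_iff
  proof (intro exI ballI)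
    fix x assume "x \<in> {x\<in>K. N x = 1}"
    hence "\<alpha> * norm x \<le> 1" using alpha(2)[of x] by auto
    thus "norm x \<le> 1 / \<alpha>" using alpha(1) by (simp add: field_simps)
  qed
  have "closed {x. N x = 1}"
    by (rule closed_Collect_eq) (auto intro: N_cont)
  thus "closed {x\<in>K. N x = 1}" using Kclosed by (simp add: Collect_conj_eq closed_Int)
qed

lemma irr_uniform:
  assumes irr: "K_irreducible K A"
  shows "\<exists>C>0. \<exists>m. \<forall>x\<in>K. C *\<^sub>R (psum A m *v x) - N x *\<^sub>R e \<in> K"
proof -
  have Api: "A \<in> pi_cone K" using irr unfolding K_irreducible_def by auto
  define Bs where "Bs = {x\<in>K. N x = 1}"
  have "\<forall>x\<in>Bs. \<exists>cm. fst cm \<ge> (0::real) \<and> fst cm *\<^sub>R (psum A (snd cm) *v x) - 2 *\<^sub>R e \<in> K"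
  proof
    fix x assume "x \<in> Bs"
    hence "x \<in> K" "x \<noteq> 0" unfolding Bs_def by auto
    then obtain c m where "c \<ge> 0" "c *\<^sub>R (psum A m *v x) - 2 *\<^sub>R e \<in> K"
      using irr_orbit[OF irr] by blast
    thus "\<exists>cm. fst cm \<ge> (0::real) \<and> fst cm *\<^sub>R (psum A (snd cm) *v x) - 2 *\<^sub>R e \<in> K"
      by (intro exI[of _ "(c, m)"]) auto
  qed
  then obtain cm where cm: "\<And>x. x \<in> Bs \<Longrightarrow> fst (cm x) \<ge> 0 \<and> fst (cm x) *\<^sub>R (psum A (snd (cm x)) *v x) - 2 *\<^sub>R e \<in> K"
    by metis
  define U where "U x = (\<lambda>x'. fst (cm x) *\<^sub>R (psum A (snd (cm x)) *v x') - e) -` interior K" for x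
  have Uopen: "open (U x)" for x unfolding U_def
    by (intro open_vimage) (auto intro!: continuous_intros)
  have Ucov: "Bs \<subseteq> (\<Union>x\<in>Bs. U x)"
  proof
    fix x assume x: "x \<in> Bs"
    have "fst (cm x) *\<^sub>R (psum A (snd (cm x)) *v x) - 2 *\<^sub>R e + e \<in> interior K"
      using cm[OF x] by (intro int_shift) auto
    hence "x \<in> U x" unfolding U_def by (simp add: algebra_simps scaleR_2)
    thus "x \<in> (\<Union>x\<in>Bs. U x)" using x by blast
  qed
  obtain T where T: "T \<subseteq> Bs" "finite T" "Bs \<subseteq> (\<Union>x\<in>T. U x)"
    using compactE_image[OF Bs_compact[folded Bs_def] Uopen Ucov] by blast
  define C where "C = 1 + (\<Sum>x\<in>T. fst (cm x))"
  define m where "m = (\<Sum>x\<in>T. snd (cm x))"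
  have Cpos: "C > 0" unfolding C_def using T cm by (auto intro!: add_pos_nonneg sum_nonneg)
  have onB: "C *\<^sub>R (psum A m *v x) - e \<in> K" if x: "x \<in> Bs" for x
  proof -
    obtain x0 where x0: "x0 \<in> T" "x \<in> U x0" using T(3) x by blast
    let ?c = "fst (cm x0)" and ?m = "snd (cm x0)"
    have c0: "?c \<ge> 0" using cm T x0 by blast
    have xK: "x \<in> K" using x unfolding Bs_def by auto
    have i: "?c *\<^sub>R (psum A ?m *v x) - e \<in> K" using x0(2) interior_subset unfolding U_def by blast
    have cC: "?c \<le> C" unfolding C_def using T x0 cm
      by (intro order_trans[OF member_le_sum[of x0 T "\<lambda>x. fst (cm x)"]]) auto
    have mm: "?m \<le> m" unfolding m_def using T x0 by (intro member_le_sum) auto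
    have "(C - ?c) *\<^sub>R (psum A m *v x) \<in> K" using cC psum_K[OF Api xK] by (intro Kscale) auto
    moreover have "?c *\<^sub>R (psum A m *v x - psum A ?m *v x) \<in> K"
      using psum_mono_m[OF Api xK mm] c0 by (intro Kscale) auto
    ultimately have "(C - ?c) *\<^sub>R (psum A m *v x) + ?c *\<^sub>R (psum A m *v x - psum A ?m *v x)
        + (?c *\<^sub>R (psum A ?m *v x) - e) \<in> K" using i Kadd by blast
    thus ?thesis by (simp add: algebra_simps)
  qed
  have "C *\<^sub>R (psum A m *v x) - N x *\<^sub>R e \<in> K" if x: "x \<in> K" for x
  proof (cases "x = 0")
    case True thus ?thesis using K0 by simp
  next
    case False
    have Nx: "N x > 0" using False N_zero[of x] N_nonneg[of x] by linarith
    have "(1 / N x) *\<^sub>R x \<in> Bs" unfolding Bs_def using x Nx by (auto intro!: Kscale simp: N_scale)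
    hence "C *\<^sub>R (psum A m *v ((1 / N x) *\<^sub>R x)) - e \<in> K" by (rule onB)
    hence "N x *\<^sub>R (C *\<^sub>R (psum A m *v ((1 / N x) *\<^sub>R x)) - e) \<in> K" using Nx by (intro Kscale) auto
    thus ?thesis using Nx by (simp add: mv_scale_r algebra_simps)
  qed
  thus ?thesis using Cpos by blast
qed

end


context cnf
begin

definition mcert :: "'n rmat set \<Rightarrow> real \<Rightarrow> nat \<Rightarrow> 'n rmat set \<Rightarrow> ('n rmat \<Rightarrow> 'n rmat) \<Rightarrow> bool" where
  "mcert M \<delta> m G g \<longleftrightarrow> finite G \<and> G \<noteq> {} \<and> (\<forall>B\<in>G. g B \<in> M) \<and> \<delta> > 0 \<and> m \<ge> 1 \<and>
     (\<forall>x\<in>K. psum (\<Sum>B\<in>G. g B) m *v x - (\<delta> * N x) *\<^sub>R e \<in> K)"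

lemma sum_pi: "finite G \<Longrightarrow> (\<And>B. B \<in> G \<Longrightarrow> g B \<in> pi_cone K) \<Longrightarrow> (\<Sum>B\<in>G. g B) \<in> pi_cone K"
  unfolding pi_cone_def by (auto simp: mv_sum_l intro!: Ksum)

lemma P_N_cert:
  assumes "M \<in> P_N K"
  shows "\<exists>\<delta> m G. mcert M \<delta> m G id"
proof -
  from assms obtain A where Mpi: "M \<subseteq> pi_cone K" and A: "A \<in> convex hull M" "K_irreducible K A"
    unfolding P_N_def by auto
  have Api: "A \<in> pi_cone K" using A(2) unfolding K_irreducible_def by auto
  obtain C m0 where C: "C > 0" "\<And>x. x \<in> K \<Longrightarrow> C *\<^sub>R (psum A m0 *v x) - N x *\<^sub>R e \<in> K"
    using irr_uniform[OF A(2)] by blast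
  define m where "m = Suc m0"
  have Cm: "C *\<^sub>R (psum A m *v x) - N x *\<^sub>R e \<in> K" if x: "x \<in> K" for x
  proof -
    have "C *\<^sub>R (psum A m *v x - psum A m0 *v x) \<in> K"
      using psum_mono_m[OF Api x, of m0 m] C by (intro Kscale) (auto simp: m_def)
    hence "C *\<^sub>R (psum A m *v x - psum A m0 *v x) + (C *\<^sub>R (psum A m0 *v x) - N x *\<^sub>R e) \<in> K"
      using C(2)[OF x] Kadd by blast
    thus ?thesis by (simp add: algebra_simps)
  qed
  obtain G u where G: "finite G" "G \<subseteq> M" "\<And>x. x \<in> G \<Longrightarrow> 0 \<le> u x" "sum u G = 1"
      "(\<Sum>v\<in>G. u v *\<^sub>R v) = A"
    using A(1) unfolding convex_hull_explicit by blast
  have Gne: "G \<noteq> {}" using G(4) by auto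
  have u1: "u B \<le> 1" if "B \<in> G" for B
    using member_le_sum[of B G u] G that by auto
  define Q where "Q = (\<Sum>B\<in>G. id B)"
  have Qpi: "Q \<in> pi_cone K" unfolding Q_def using G Mpi by (intro sum_pi) auto
  have QA: "Q *v z - A *v z \<in> K" if z: "z \<in> K" for z
  proof -
    have "Q *v z - A *v z = (\<Sum>B\<in>G. (1 - u B) *\<^sub>R (B *v z))"
      unfolding Q_def G(5)[symmetric] using G(1)
      by (simp add: mv_sum_l mv_scale_l algebra_simps sum_subtractf)
    also have "\<dots> \<in> K" using G Mpi u1 z by (intro Ksum Kscale pi_K) auto
    finally show ?thesis .
  qed
  have pwQA: "pw Q j *v x - pw A j *v x \<in> K" if x: "x \<in> K" for x j
  proof (induction j)
    case 0 thus ?case using K0 by simp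
  next
    case (Suc j)
    have "Q *v (pw Q j *v x) - A *v (pw Q j *v x) \<in> K" using QA pw_K[OF Qpi x] by blast
    moreover have "A *v (pw Q j *v x - pw A j *v x) \<in> K" using pi_K[OF Api Suc] .
    ultimately have "(Q *v (pw Q j *v x) - A *v (pw Q j *v x)) + A *v (pw Q j *v x - pw A j *v x) \<in> K"
      using Kadd by blast
    thus ?case by (simp add: mv_diff_r matrix_vector_mul_assoc)
  qed
  have "psum Q m *v x - ((1 / C) * N x) *\<^sub>R e \<in> K" if x: "x \<in> K" for x
  proof -
    have "psum Q m *v x - psum A m *v x = (\<Sum>j<m. pw Q j *v x - pw A j *v x)"
      unfolding psum_def by (simp add: mv_sum_l sum_subtractf)
    also have "\<dots> \<in> K" using pwQA x by (intro Ksum) auto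
    finally have d: "psum Q m *v x - psum A m *v x \<in> K" .
    have "(1 / C) *\<^sub>R (C *\<^sub>R (psum A m *v x) - N x *\<^sub>R e) \<in> K" using Cm[OF x] C by (intro Kscale) auto
    hence "(psum Q m *v x - psum A m *v x) + (1 / C) *\<^sub>R (C *\<^sub>R (psum A m *v x) - N x *\<^sub>R e) \<in> K"
      using d Kadd by blast
    thus ?thesis using C by (simp add: algebra_simps)
  qed
  hence "mcert M (1 / C) m G id" unfolding mcert_def Q_def using G Gne C m_def by auto
  thus ?thesis by blast
qed

lemma expand_pw:
  assumes G: "finite G" "G \<noteq> {}" "\<And>B. B \<in> G \<Longrightarrow> g B \<in> M"
  shows "\<exists>S\<in>prods M j. N (U *v (pw (\<Sum>B\<in>G. g B) j *v y)) \<le> real (card G) ^ j * N (U *v (S *v y))"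
proof (induction j arbitrary: U)
  case 0 thus ?case by simp
next
  case (Suc j)
  define Q where "Q = (\<Sum>B\<in>G. g B)"
  define z where "z = pw Q j *v y"
  define v where "v B = N (U *v (g B *v z))" for B
  have "Max (v ` G) \<in> v ` G" using G by (intro Max_in) auto
  then obtain B0 where B0: "B0 \<in> G" "v B0 = Max (v ` G)" by auto
  have vle: "v B \<le> v B0" if "B \<in> G" for B using B0 G that by (simp add: Max_ge)
  obtain S where S: "S \<in> prods M j" 
    "N ((U ** g B0) *v (pw Q j *v y)) \<le> real (card G) ^ j * N ((U ** g B0) *v (S *v y))"
    using Suc.IH[of "U ** g B0"] unfolding Q_def by blast
  have e1: "pw Q (Suc j) *v y = Q *v z" unfolding z_def by (simp add: matrix_vector_mul_assoc)
  have e2: "U *v (Q *v z) = (\<Sum>B\<in>G. U *v (g B *v z))" unfolding Q_def using G(1) by (simp add: mv_sum_l mv_sum_r)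
  have "N (U *v (pw Q (Suc j) *v y)) = N (\<Sum>B\<in>G. U *v (g B *v z))"
    unfolding e1 e2 ..
  also have "\<dots> \<le> (\<Sum>B\<in>G. v B)" unfolding v_def using G(1) by (rule N_sum)
  also have "\<dots> \<le> real (card G) * v B0" using vle by (rule sum_bounded_above)
  also have "v B0 = N ((U ** g B0) *v (pw Q j *v y))" unfolding v_def z_def
    by (simp add: matrix_vector_mul_assoc matrix_mul_assoc)
  also have "real (card G) * \<dots> \<le> real (card G) * (real (card G) ^ j * N ((U ** g B0) *v (S *v y)))"
    using S(2) by (intro mult_left_mono) auto
  also have "\<dots> = real (card G) ^ Suc j * N (U *v ((g B0 ** S) *v y))"
    by (simp add: matrix_vector_mul_assoc matrix_mul_assoc)
  finally have "N (U *v (pw Q (Suc j) *v y)) \<le> real (card G) ^ Suc j * N (U *v ((g B0 ** S) *v y))" .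
  moreover have "g B0 ** S \<in> prods M (Suc j)" using G(3)[OF B0(1)] S(1) by auto
  ultimately show ?case unfolding Q_def by blast
qed

lemma expand_psum:
  assumes G: "finite G" "G \<noteq> {}" "\<And>B. B \<in> G \<Longrightarrow> g B \<in> M" and m: "m \<ge> 1"
  shows "\<exists>j<m. \<exists>S\<in>prods M j. N (U *v (psum (\<Sum>B\<in>G. g B) m *v y)) \<le> (real m * real (card G) ^ m) * N (U *v (S *v y))"
proof -
  define Q where "Q = (\<Sum>B\<in>G. g B)"
  have "\<forall>j. \<exists>S. S \<in> prods M j \<and> N (U *v (pw Q j *v y)) \<le> real (card G) ^ j * N (U *v (S *v y))"
    using expand_pw[of G g M, OF G] unfolding Q_def by blast
  then obtain Sf where Sf: "\<And>j. Sf j \<in> prods M j"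
    "\<And>j. N (U *v (pw Q j *v y)) \<le> real (card G) ^ j * N (U *v (Sf j *v y))" by metis
  define w where "w j = N (U *v (Sf j *v y))" for j
  have "Max (w ` {..<m}) \<in> w ` {..<m}" using m by (intro Max_in) (auto simp: lessThan_empty_iff)
  then obtain j0 where j0: "j0 < m" "w j0 = Max (w ` {..<m})" by auto
  have wle: "w j \<le> w j0" if "j < m" for j using j0 that by (simp add: Max_ge)
  have cG: "real (card G) \<ge> 1" using G by (simp add: Suc_leI card_gt_0_iff)
  have "N (U *v (psum Q m *v y)) = N (\<Sum>j<m. U *v (pw Q j *v y))"
    unfolding psum_def by (simp add: mv_sum_l mv_sum_r)
  also have "\<dots> \<le> (\<Sum>j<m. N (U *v (pw Q j *v y)))" by (rule N_sum) simp
  also have "\<dots> \<le> (\<Sum>j<m. real (card G) ^ m * w j0)"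
  proof (rule sum_mono)
    fix j assume j: "j \<in> {..<m}"
    have "N (U *v (pw Q j *v y)) \<le> real (card G) ^ j * w j" using Sf(2) unfolding w_def .
    also have "\<dots> \<le> real (card G) ^ m * w j0"
      using j wle[of j] cG N_nonneg unfolding w_def
      by (intro mult_mono power_increasing) auto
    finally show "N (U *v (pw Q j *v y)) \<le> real (card G) ^ m * w j0" .
  qed
  also have "\<dots> = (real m * real (card G) ^ m) * w j0" by simp
  finally show ?thesis unfolding Q_def w_def using j0(1) Sf(1) by blast
qed

lemma mcert_cert:
  assumes mc: "mcert M \<delta> m G g" and Mpi: "M \<subseteq> pi_cone K" and y: "y \<in> K" and U: "U \<in> prods M t"
  shows "\<exists>j\<le>m. \<exists>S\<in>prods M j. \<delta> * N y * N (U *v e) \<le> (real m * real (card G) ^ m) * N (U *v (S *v y))"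
proof -
  define Q where "Q = (\<Sum>B\<in>G. g B)"
  have mc': "finite G" "G \<noteq> {}" "\<And>B. B \<in> G \<Longrightarrow> g B \<in> M" "\<delta> > 0" "m \<ge> 1"
      "psum Q m *v y - (\<delta> * N y) *\<^sub>R e \<in> K"
    using mc y unfolding mcert_def Q_def by auto
  have Upi: "U \<in> pi_cone K" using prods_pi[OF Mpi U] .
  have "U *v (psum Q m *v y - (\<delta> * N y) *\<^sub>R e) \<in> K" using pi_K[OF Upi mc'(6)] .
  hence d: "U *v (psum Q m *v y) - (\<delta> * N y) *\<^sub>R (U *v e) \<in> K" by (simp add: mv_diff_r mv_scale_r)
  have k: "(\<delta> * N y) *\<^sub>R (U *v e) \<in> K" using mc'(4) N_nonneg pi_K[OF Upi eK] by (intro Kscale) auto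
  have "\<delta> * N y * N (U *v e) = N ((\<delta> * N y) *\<^sub>R (U *v e))"
    using mc'(4) N_nonneg[of y] by (simp add: N_scale)
  also have "\<dots> \<le> N (U *v (psum Q m *v y))" by (rule N_mono[OF d k])
  finally have a: "\<delta> * N y * N (U *v e) \<le> N (U *v (psum Q m *v y))" .
  obtain j S where "j < m" "S \<in> prods M j"
    "N (U *v (psum Q m *v y)) \<le> (real m * real (card G) ^ m) * N (U *v (S *v y))"
    using expand_psum[of G g M m, OF mc'(1-3,5)] unfolding Q_def by blast
  thus ?thesis using a by (intro exI[of _ j]) (auto intro!: bexI[of _ S])
qed

end


lemma infdist_lessD:
  assumes "A \<noteq> {}" "infdist x A < d"
  shows "\<exists>a\<in>A. dist x a < d"
proof -
  have "(INF a\<in>A. dist x a) < d" using assms by (simp add: infdist_notempty)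
  thus ?thesis using assms(1) by (subst (asm) cInf_less_iff) (auto intro: bdd_belowI[of _ 0])
qed

lemma vec_half: "(P::real^'n) + (d * n / 2) *\<^sub>R e - (d * n) *\<^sub>R e = P - (d * n / 2) *\<^sub>R e"
proof -
  have h: "(d * n / 2) - d * n = - (d * n / 2)" by simp
  have "P + (d * n / 2) *\<^sub>R e - (d * n) *\<^sub>R e = P + ((d * n / 2) - d * n) *\<^sub>R e"
    by (simp only: scaleR_left_diff_distrib add_diff_eq)
  also have "\<dots> = P + (- (d * n / 2)) *\<^sub>R e" by (simp only: h)
  also have "\<dots> = P - (d * n / 2) *\<^sub>R e" by simp
  finally show ?thesis .
qed

lemma tendsto_mm:
  fixes f g :: "'a \<Rightarrow> real^'n^'n"
  assumes "(f \<longlongrightarrow> a) F" "(g \<longlongrightarrow> b) F"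
  shows "((\<lambda>x. f x ** g x) \<longlongrightarrow> a ** b) F"
  unfolding matrix_matrix_mult_def
  by (intro tendsto_vec_lambda tendsto_sum tendsto_mult tendsto_vec_nth assms)

lemma tendsto_pw: "((\<lambda>Q. pw Q j) \<longlongrightarrow> pw Qc j) (at Qc)"
proof (induction j)
  case 0 thus ?case by simp
next
  case (Suc j) thus ?case by (simp add: tendsto_mm tendsto_ident_at)
qed

lemma tendsto_psum: "((\<lambda>Q. psum Q m) \<longlongrightarrow> psum Qc m) (at Qc)"
  unfolding psum_def by (intro tendsto_sum tendsto_pw)

lemma psum_cont_eps:
  assumes "\<epsilon> > 0"
  shows "\<exists>d>0. \<forall>Q. norm (Q - Qc) < d \<longrightarrow> norm (psum Q m - psum Qc m) < \<epsilon>"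
proof -
  obtain d where d: "d > 0" "\<And>Q. Q \<noteq> Qc \<and> norm (Q - Qc) < d \<longrightarrow> norm (psum Q m - psum Qc m) < \<epsilon>"
    using tendsto_psum[where Qc=Qc and m=m] assms unfolding LIM_eq by blast
  show ?thesis
  proof (intro exI[of _ d] conjI allI impI)
    fix Q assume "norm (Q - Qc) < d"
    thus "norm (psum Q m - psum Qc m) < \<epsilon>" using d assms by (cases "Q = Qc") auto
  qed (use d in auto)
qed

context cnf
begin

lemma mcert_transfer:
  assumes mc: "mcert M \<delta> m G id"
  shows "\<exists>\<eta>>0. \<forall>M'. (\<forall>B\<in>G. \<exists>B'\<in>M'. dist B B' < \<eta>) \<longrightarrow> (\<exists>g. mcert M' (\<delta> / 2) m G g)"
proof -
  have mc': "finite G" "G \<noteq> {}" "\<delta> > 0" "m \<ge> 1"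
    "\<And>x. x \<in> K \<Longrightarrow> psum (\<Sum>B\<in>G. B) m *v x - (\<delta> * N x) *\<^sub>R e \<in> K"
    using mc unfolding mcert_def by auto
  define Q where "Q = (\<Sum>B\<in>G. B)"
  define \<epsilon> where "\<epsilon> = \<delta> * \<alpha> * r0 / 2"
  have ep: "\<epsilon> > 0" unfolding \<epsilon>_def using mc'(3) alpha r0 by simp
  obtain d where d: "d > 0" "\<And>Q'. norm (Q' - Q) < d \<Longrightarrow> norm (psum Q' m - psum Q m) < \<epsilon>"
    using psum_cont_eps[OF ep, where Qc=Q and m=m] by blast
  have cG: "card G > 0" using mc' by (simp add: card_gt_0_iff)
  define \<eta> where "\<eta> = d / real (card G)"
  have eta: "\<eta> > 0" unfolding \<eta>_def using d cG by simp
  have "\<exists>g. mcert M' (\<delta> / 2) m G g" if cl: "\<forall>B\<in>G. \<exists>B'\<in>M'. dist B B' < \<eta>" for M'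
  proof -
    obtain g where g: "\<And>B. B \<in> G \<Longrightarrow> g B \<in> M' \<and> dist B (g B) < \<eta>" using cl by metis
    define Q' where "Q' = (\<Sum>B\<in>G. g B)"
    have "norm (Q' - Q) = norm (\<Sum>B\<in>G. g B - B)" unfolding Q'_def Q_def by (simp add: sum_subtractf)
    also have "\<dots> \<le> (\<Sum>B\<in>G. norm (g B - B))" by (rule norm_sum)
    also have "\<dots> < (\<Sum>B\<in>G. \<eta>)"
      using g mc'(1,2) by (intro sum_strict_mono) (auto simp: dist_norm norm_minus_commute)
    also have "\<dots> = d" unfolding \<eta>_def using cG by simp
    finally have nQ: "norm (psum Q' m - psum Q m) < \<epsilon>" by (rule d(2))
    have "psum Q' m *v x - (\<delta> / 2 * N x) *\<^sub>R e \<in> K" if x: "x \<in> K" for x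
    proof -
      define D where "D = psum Q' m - psum Q m"
      have nD: "norm (D *v x) \<le> \<epsilon> * norm x"
        using norm_mv[of D x] nQ unfolding D_def by (meson less_imp_le mult_right_mono norm_ge_zero order_trans)
      also have "\<dots> \<le> \<epsilon> * (N x / \<alpha>)" using alpha ep by (intro mult_left_mono) (auto simp: field_simps)
      finally have "norm (D *v x) / r0 \<le> \<delta> / 2 * N x" unfolding \<epsilon>_def using alpha r0
        by (simp add: field_simps)
      hence "(\<delta> / 2 * N x - norm (D *v x) / r0) *\<^sub>R e \<in> K" using eK by (intro Kscale) auto
      hence k1: "(\<delta> / 2 * N x - norm (D *v x) / r0) *\<^sub>R e + ((norm (D *v x) / r0) *\<^sub>R e + D *v x) \<in> K"
        using dom_e[of "D *v x"] Kadd by blast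
      have k2: "psum Q m *v x - (\<delta> * N x) *\<^sub>R e \<in> K" using mc'(5)[OF x] unfolding Q_def .
      have "(\<delta> / 2 * N x - norm (D *v x) / r0) *\<^sub>R e + ((norm (D *v x) / r0) *\<^sub>R e + D *v x)
           + (psum Q m *v x - (\<delta> * N x) *\<^sub>R e) \<in> K" using Kadd[OF k1 k2] .
      hence "psum Q' m *v x + (\<delta> * N x / 2) *\<^sub>R e - (\<delta> * N x) *\<^sub>R e \<in> K"
        unfolding D_def by (simp add: mv_diff_l algebra_simps)
      hence "psum Q' m *v x - (\<delta> * N x / 2) *\<^sub>R e \<in> K" by (simp only: vec_half)
      thus ?thesis by simp
    qed
    hence "mcert M' (\<delta> / 2) m G g" unfolding mcert_def Q'_def using mc' g by auto
    thus ?thesis by blast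
  qed
  thus ?thesis using eta by blast
qed

end


lemma compact_norm_bound: "compact (M::('n::finite) rmat set) \<Longrightarrow> \<exists>R. \<forall>A\<in>M. norm A \<le> R"
  using compact_imp_bounded bounded_iff by blast

lemma haus_le1:
  assumes "compact M" "M' \<noteq> {}" "B \<in> M"
  shows "infdist B M' \<le> hausdorff_dist M M'"
proof -
  obtain R where R: "\<forall>A\<in>M. norm A \<le> R" using compact_norm_bound[OF assms(1)] by blast
  obtain a0 where a0: "a0 \<in> M'" using assms(2) by blast
  have "bdd_above ((\<lambda>A. infdist A M') ` M)"
  proof (rule bdd_aboveI2)
    fix A assume "A \<in> M"
    have "infdist A M' \<le> dist A a0" using a0 by (rule infdist_le)
    also have "\<dots> \<le> norm A + norm a0" by (simp add: dist_norm norm_triangle_ineq4)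
    also have "\<dots> \<le> R + norm a0" using R \<open>A \<in> M\<close> by simp
    finally show "infdist A M' \<le> R + norm a0" .
  qed
  hence "infdist B M' \<le> (SUP A\<in>M. infdist A M')" using assms(3) by (intro cSUP_upper)
  thus ?thesis unfolding hausdorff_dist_def by simp
qed

lemma haus_le2:
  assumes "compact M'" "M \<noteq> {}" "B \<in> M'"
  shows "infdist B M \<le> hausdorff_dist M M'"
  using haus_le1[OF assms] unfolding hausdorff_dist_def by simp

context cnf
begin

lemma P_N_props: "M \<in> P_N K \<Longrightarrow> M \<noteq> {} \<and> compact M \<and> M \<subseteq> pi_cone K"
  unfolding P_N_def by auto

lemma key_bound:
  assumes XP: "X \<subseteq> P_N K" and hc: "hausdorff_compact X"
  shows "\<exists>B0. \<forall>M\<in>X. \<forall>t. \<forall>T\<in>prods M t. N (T *v e) \<le> B0 * jsr M ^ t"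
proof (rule ccontr)
  assume "\<not> ?thesis"
  hence "\<forall>k::nat. \<exists>M. M \<in> X \<and> (\<exists>t T. T \<in> prods M t \<and> N (T *v e) > real k * jsr M ^ t)"
    by (meson not_le)
  then obtain Ms where Ms: "\<And>k. Ms k \<in> X" "\<And>k. \<exists>t T. T \<in> prods (Ms k) t \<and> N (T *v e) > real k * jsr (Ms k) ^ t"
    by metis
  obtain M0 r where M0: "M0 \<in> X" "strict_mono r" "(\<lambda>k. hausdorff_dist (Ms (r k)) M0) \<longlonglongrightarrow> 0"
    using hc Ms(1) unfolding hausdorff_compact_def by blast
  have M0p: "M0 \<noteq> {}" "compact M0" "M0 \<subseteq> pi_cone K" using P_N_props XP M0(1) by auto
  obtain \<delta> m G where mc: "mcert M0 \<delta> m G id" using P_N_cert XP M0(1) by blast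
  have mc': "finite G" "G \<noteq> {}" "G \<subseteq> M0" "\<delta> > 0" "m \<ge> 1" using mc unfolding mcert_def by auto
  obtain \<eta> where eta: "\<eta> > 0" "\<And>M'. (\<forall>B\<in>G. \<exists>B'\<in>M'. dist B B' < \<eta>) \<Longrightarrow> \<exists>g. mcert M' (\<delta> / 2) m G g"
    using mcert_transfer[OF mc] by blast
  obtain R0 where R0: "\<And>A. A \<in> M0 \<Longrightarrow> norm A \<le> R0" using compact_norm_bound[OF M0p(2)] by blast
  define W where "W = real m * real (card G) ^ m"
  have W0: "W > 0" unfolding W_def using mc' by (simp add: card_gt_0_iff)
  define Bst where "Bst = max (N e) ((W / (\<delta> / 2)) * max 1 ((R0 + 1) ^ m))"
  have "eventually (\<lambda>k. hausdorff_dist (Ms (r k)) M0 < min \<eta> 1) sequentially"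
    by (rule order_tendstoD(2)[OF M0(3)]) (use eta in simp)
  then obtain k1 where k1: "\<And>k. k \<ge> k1 \<Longrightarrow> hausdorff_dist (Ms (r k)) M0 < min \<eta> 1"
    unfolding eventually_sequentially by blast
  define k where "k = max k1 (nat \<lceil>Bst\<rceil> + 1)"
  define M' where "M' = Ms (r k)"
  have hk: "hausdorff_dist M' M0 < min \<eta> 1" unfolding M'_def k_def by (intro k1) simp
  have M'p: "M' \<noteq> {}" "compact M'" "M' \<subseteq> pi_cone K" using P_N_props XP Ms(1) unfolding M'_def by auto
  have "\<forall>B\<in>G. \<exists>B'\<in>M'. dist B B' < \<eta>"
  proof
    fix B assume "B \<in> G"
    hence "infdist B M' \<le> hausdorff_dist M' M0" using haus_le2[OF M0p(2) M'p(1)] mc' by blast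
    hence "infdist B M' < \<eta>" using hk by simp
    thus "\<exists>B'\<in>M'. dist B B' < \<eta>" using infdist_lessD M'p(1) by blast
  qed
  then obtain g where mc2: "mcert M' (\<delta> / 2) m G g" using eta(2) by blast
  have bs: "bset M' (R0 + 1)"
  proof
    show "M' \<noteq> {}" by fact
    fix A assume A: "A \<in> M'"
    hence "infdist A M0 \<le> hausdorff_dist M' M0" using haus_le1[OF M'p(2) M0p(1)] by blast
    hence "infdist A M0 < 1" using hk by simp
    then obtain A0 where A0: "A0 \<in> M0" "dist A A0 < 1" using infdist_lessD M0p(1) by blast
    have "norm A \<le> norm A0 + dist A A0" by (metis dist_norm norm_triangle_sub add.commute)
    thus "norm A \<le> R0 + 1" using R0[OF A0(1)] A0(2) by linarith
  qed
  interpret bs: bset M' "R0 + 1" by (rule bs)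
  have jle: "jsr M' \<le> R0 + 1" by (rule bs.jsr_le)
  have j0: "jsr M' \<ge> 0" by (rule bs.jsr_nonneg)
  have bound: "N (T *v e) \<le> Bst * jsr M' ^ t" if T: "T \<in> prods M' t" for t T
  proof -
    have "N (T *v e) \<le> max (N e) ((W / (\<delta> / 2)) * max 1 (jsr M' ^ m)) * jsr M' ^ t"
    proof -
      have cert: "\<And>y t U. y \<in> K \<Longrightarrow> U \<in> prods M' t \<Longrightarrow> \<exists>j\<le>m. \<exists>S\<in>prods M' j.
           \<delta> / 2 * N y * N (U *v e) \<le> W * N (U *v (S *v y))"
        using mcert_cert[OF mc2 M'p(3)] unfolding W_def by blast
      have hd: "\<delta> / 2 > 0" using mc' by simp
      show ?thesis by (rule core[OF M'p(3) bs hd W0 cert T])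
    qed
    also have "\<dots> \<le> Bst * jsr M' ^ t" unfolding Bst_def
      using j0 jle W0 mc' by (intro mult_right_mono max.mono mult_left_mono power_mono) auto
    finally show ?thesis .
  qed
  obtain t T where T: "T \<in> prods M' t" "N (T *v e) > real (r k) * jsr M' ^ t"
    using Ms(2)[of "r k"] unfolding M'_def by blast
  have rk: "real (r k) > Bst"
  proof -
    have "k \<le> r k" using M0(2) by (rule seq_suble)
    moreover have "real (nat \<lceil>Bst\<rceil> + 1) > Bst" by linarith
    ultimately show ?thesis unfolding k_def by linarith
  qed
  have "real (r k) * jsr M' ^ t < Bst * jsr M' ^ t" using T bound[OF T(1)] by linarith
  moreover have "jsr M' ^ t \<ge> 0" using j0 by simp
  ultimately have "Bst * jsr M' ^ t \<le> real (r k) * jsr M' ^ t"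
    using rk by (intro mult_right_mono) auto
  thus False using \<open>real (r k) * jsr M' ^ t < Bst * jsr M' ^ t\<close> by linarith
qed

end


context cnf
begin

lemma gen_bound:
  assumes Mpi: "M \<subseteq> pi_cone K" and B0: "B0 \<ge> 0" and rho: "\<rho> \<ge> 0"
    and bnd: "\<And>t T. T \<in> prods M t \<Longrightarrow> N (T *v e) \<le> B0 * \<rho> ^ t"
    and S: "S \<in> prods M t"
  shows "N (S *v x) \<le> (3 * B0 / (\<alpha> * r0)) * \<rho> ^ t * N x"
proof -
  define c where "c = N x / (\<alpha> * r0)"
  have c0: "c \<ge> 0" unfolding c_def using alpha r0 N_nonneg by simp
  have d: "c *\<^sub>R e - x \<in> K" "c *\<^sub>R e + x \<in> K" using dom_eN[of x] unfolding c_def by auto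
  have Spi: "S \<in> pi_cone K" using prods_pi[OF Mpi S] .
  have k1: "S *v (c *\<^sub>R e + x) \<in> K" using pi_K[OF Spi d(2)] .
  have h1: "S *v (c *\<^sub>R e + x) = c *\<^sub>R (S *v e) + S *v x" by (simp add: mv_add_r mv_scale_r)
  have h2: "S *v (c *\<^sub>R e - x) = c *\<^sub>R (S *v e) - S *v x" by (simp add: mv_diff_r mv_scale_r)
  have h3: "(2 * c) *\<^sub>R (S *v e) = c *\<^sub>R (S *v e) + c *\<^sub>R (S *v e)" by (metis mult_2 scaleR_add_left)
  have "(2 * c) *\<^sub>R (S *v e) - S *v (c *\<^sub>R e + x) = S *v (c *\<^sub>R e - x)"
    by (simp only: h1 h2 h3) (simp add: algebra_simps)
  hence k2: "(2 * c) *\<^sub>R (S *v e) - S *v (c *\<^sub>R e + x) \<in> K" using pi_K[OF Spi d(1)] by simp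
  have "N (S *v (c *\<^sub>R e + x)) \<le> N ((2 * c) *\<^sub>R (S *v e))" by (rule N_mono[OF k2 k1])
  also have "\<dots> = 2 * c * N (S *v e)" using c0 by (simp add: N_scale)
  finally have n1: "N (S *v (c *\<^sub>R e + x)) \<le> 2 * c * N (S *v e)" .
  have "S *v x = S *v (c *\<^sub>R e + x) - c *\<^sub>R (S *v e)" by (simp add: mv_add_r mv_scale_r)
  hence "N (S *v x) \<le> N (S *v (c *\<^sub>R e + x)) + N (c *\<^sub>R (S *v e))" using N_diff_tri by metis
  also have "\<dots> \<le> 2 * c * N (S *v e) + c * N (S *v e)" using n1 c0 by (simp add: N_scale)
  also have "\<dots> = 3 * c * N (S *v e)" by simp
  also have "\<dots> \<le> 3 * c * (B0 * \<rho> ^ t)" using bnd[OF S] c0 by (intro mult_left_mono) auto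
  also have "\<dots> = (3 * B0 / (\<alpha> * r0)) * \<rho> ^ t * N x" unfolding c_def by (simp add: field_simps)
  finally show ?thesis .
qed

lemma ecc_bound:
  assumes lo: "\<And>x. N x \<le> v x" and up: "\<And>x. v x \<le> c * N x"
  shows "ecc N v \<le> c"
proof -
  let ?A = "{x. N x = 1}"
  have ne: "?A \<noteq> {}"
  proof -
    have "N ((1 / N e) *\<^sub>R e) = 1" using Ne_pos by (simp add: N_scale)
    thus ?thesis by blast
  qed
  have s: "(SUP x\<in>?A. v x) \<le> c" using ne up by (intro cSUP_least) (auto, metis mult.right_neutral)
  have i: "(INF x\<in>?A. v x) \<ge> 1" using ne lo by (intro cINF_greatest) (auto, metis)
  have s0: "(SUP x\<in>?A. v x) \<ge> 0"
  proof -
    obtain x where x: "x \<in> ?A" using ne by blast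
    have "bdd_above (v ` ?A)" using up by (intro bdd_aboveI2[of _ _ c]) (auto, metis mult.right_neutral)
    hence "v x \<le> (SUP x\<in>?A. v x)" using x by (intro cSUP_upper)
    thus ?thesis using lo[of x] N_nonneg[of x] by linarith
  qed
  have "ecc N v = (SUP x\<in>?A. v x) / (INF x\<in>?A. v x)" unfolding ecc_def ..
  also have "\<dots> \<le> (SUP x\<in>?A. v x)" using i s0 by (simp add: divide_le_eq mult_le_cancel_left1 )
  also have "\<dots> \<le> c" by (rule s)
  finally show ?thesis .
qed

lemma construct:
  assumes Mpi: "M \<subseteq> pi_cone K" and B0: "B0 \<ge> 0" and rho: "jsr M \<ge> 0"
    and bnd: "\<And>t T. T \<in> prods M t \<Longrightarrow> N (T *v e) \<le> B0 * jsr M ^ t"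
  shows "\<exists>v. is_norm v \<and> K_monotone K v \<and> extremal M v \<and> ecc N v < 3 * B0 / (\<alpha> * r0) + 2"
proof -
  define \<rho> where "\<rho> = jsr M"
  define c where "c = 3 * B0 / (\<alpha> * r0)"
  have c0: "c \<ge> 0" unfolding c_def using B0 alpha r0 by simp
  have gb: "N (S *v x) \<le> c * \<rho> ^ t * N x" if "S \<in> prods M t" for S t x
    unfolding c_def \<rho>_def using gen_bound[OF Mpi B0 rho bnd that] .
  show ?thesis
  proof (cases "\<rho> = 0")
    case True
    have ext: "extremal M N" unfolding extremal_def
    proof (intro conjI allI impI)
      show "is_norm N" by (rule nN)
      fix x t S assume S: "S \<in> prods M t"
      show "N (S *v x) \<le> jsr M ^ t * N x"
      proof (cases t)
        case 0 thus ?thesis using S by simp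
      next
        case (Suc t')
        thus ?thesis using gb[OF S, of x] True unfolding \<rho>_def by simp
      qed
    qed
    have "ecc N N \<le> 1" by (rule ecc_bound) auto
    thus ?thesis using nN mN ext c0 unfolding c_def by (intro exI[of _ N]) auto
  next
    case False
    hence rp: "\<rho> > 0" using rho unfolding \<rho>_def by simp
    define \<Sigma> where "\<Sigma> = {p. snd p \<in> prods M (fst p)}"
    define f where "f x (p :: nat \<times> 'n rmat) = N (snd p *v x) / \<rho> ^ fst p" for x p
    define v where "v x = (SUP p\<in>\<Sigma>. f x p)" for x
    have fb: "f x p \<le> c * N x" if "p \<in> \<Sigma>" for x p
    proof -
      have "N (snd p *v x) \<le> c * \<rho> ^ fst p * N x" using gb that unfolding \<Sigma>_def by blast
      thus ?thesis unfolding f_def using rp by (simp add: divide_le_eq algebra_simps)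
    qed
    have bdd: "bdd_above (f x ` \<Sigma>)" for x using fb by (intro bdd_aboveI2) blast
    have Sne: "(0, mat 1) \<in> \<Sigma>" unfolding \<Sigma>_def by simp
    have f0: "f x (0, mat 1) = N x" for x unfolding f_def by simp
    have vup: "f x p \<le> v x" if "p \<in> \<Sigma>" for x p unfolding v_def using bdd that by (intro cSUP_upper)
    have vlub: "v x \<le> a" if "\<And>p. p \<in> \<Sigma> \<Longrightarrow> f x p \<le> a" for x a
      unfolding v_def using Sne that by (intro cSUP_least) auto
    have vge: "N x \<le> v x" for x using vup[OF Sne, of x] f0 by simp
    have vle: "v x \<le> c * N x" for x using fb by (intro vlub)
    have fnn: "f x p \<ge> 0" for x p unfolding f_def using rp N_nonneg by simp
    have vsc: "v (a *\<^sub>R x) \<le> \<bar>a\<bar> * v x" for a x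
    proof (rule vlub)
      fix p assume p: "p \<in> \<Sigma>"
      have "f (a *\<^sub>R x) p = \<bar>a\<bar> * f x p" unfolding f_def by (simp add: mv_scale_r N_scale)
      also have "\<dots> \<le> \<bar>a\<bar> * v x" using vup[OF p] by (intro mult_left_mono) auto
      finally show "f (a *\<^sub>R x) p \<le> \<bar>a\<bar> * v x" .
    qed
    have norm_v: "is_norm v" unfolding is_norm_def
    proof (intro conjI allI)
      fix x show "v x \<ge> 0" using vge[of x] N_nonneg[of x] by linarith
    next
      fix x show "v x = 0 \<longleftrightarrow> x = 0"
      proof
        assume "v x = 0" thus "x = 0" using vge[of x] N_nonneg[of x] N_zero[of x] by linarith
      next
        assume "x = 0" thus "v x = 0" using vle[of 0] vge[of 0] by simp
      qed
    next
      fix a x show "v (a *\<^sub>R x) = \<bar>a\<bar> * v x"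
      proof (cases "a = 0")
        case True thus ?thesis using vle[of 0] vge[of 0] by simp
      next
        case False
        have "v x = v ((1 / a) *\<^sub>R (a *\<^sub>R x))" using False by simp
        also have "\<dots> \<le> \<bar>1 / a\<bar> * v (a *\<^sub>R x)" by (rule vsc)
        finally have "\<bar>a\<bar> * v x \<le> v (a *\<^sub>R x)" using False by (simp add: field_simps)
        thus ?thesis using vsc[of a x] by linarith
      qed
    next
      fix x y show "v (x + y) \<le> v x + v y"
      proof (rule vlub)
        fix p assume p: "p \<in> \<Sigma>"
        have "f (x + y) p \<le> f x p + f y p" unfolding f_def using rp
          by (simp add: mv_add_r add_divide_distrib[symmetric] divide_right_mono N_tri)
        also have "\<dots> \<le> v x + v y" using vup[OF p] by (intro add_mono)
        finally show "f (x + y) p \<le> v x + v y" .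
      qed
    qed
    have mono_v: "K_monotone K v" unfolding K_monotone_def cone_ge_def
    proof (intro allI impI)
      fix x y assume xy: "x - y \<in> K \<and> y - 0 \<in> K"
      show "v y \<le> v x"
      proof (rule vlub)
        fix p assume p: "p \<in> \<Sigma>"
        have Spi: "snd p \<in> pi_cone K" using prods_pi[OF Mpi] p unfolding \<Sigma>_def by blast
        have "N (snd p *v y) \<le> N (snd p *v x)"
          using pi_mono[OF Spi, of x y] pi_K[OF Spi, of y] xy by (intro N_mono) auto
        hence "f y p \<le> f x p" unfolding f_def using rp by (simp add: divide_right_mono)
        thus "f y p \<le> v x" using vup[OF p, of x] by linarith
      qed
    qed
    have ext: "extremal M v" unfolding extremal_def
    proof (intro conjI allI impI norm_v)
      fix x t S assume S: "S \<in> prods M t"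
      show "v (S *v x) \<le> jsr M ^ t * v x" unfolding \<rho>_def[symmetric]
      proof (rule vlub)
        fix p assume p: "p \<in> \<Sigma>"
        have pp: "(fst p + t, snd p ** S) \<in> \<Sigma>" using p S prods_mult unfolding \<Sigma>_def by auto
        have "f (S *v x) p = \<rho> ^ t * f x (fst p + t, snd p ** S)"
          unfolding f_def using rp by (simp add: matrix_vector_mul_assoc power_add field_simps)
        also have "\<dots> \<le> \<rho> ^ t * v x" using vup[OF pp] rp by (intro mult_left_mono) auto
        finally show "f (S *v x) p \<le> \<rho> ^ t * v x" .
      qed
    qed
    have "ecc N v \<le> c" by (rule ecc_bound[OF vge vle])
    thus ?thesis using norm_v mono_v ext unfolding c_def by (intro exI[of _ v]) auto
  qed
qed

end

theorem mainTheorem9: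
  fixes K :: "('n::finite) rvec set"
    and N :: "'n rvec \<Rightarrow> real"
    and X :: "'n rmat set set"
  assumes "proper_cone K"
    and "is_norm N" and "K_monotone K N"
    and "X \<subseteq> P_N K"
    and "hausdorff_compact X"
  shows "\<exists>C::real. 0 < C \<and> (\<forall>M\<in>X. \<exists>v. is_norm v \<and> K_monotone K v \<and>
            extremal M v \<and> ecc N v < C)"
proof -
  interpret cn K N using assms(1-3) by unfold_locales
  obtain e where e: "e \<in> interior K" using Kint by blast
  obtain r0 where r0: "r0 > 0" "cball e r0 \<subseteq> K" using e mem_interior_cball by blast
  obtain \<alpha> where a: "\<alpha> > 0" "\<And>x. \<alpha> * norm x \<le> N x" using N_lower by blast
  obtain \<beta> where b: "\<beta> > 0" "\<And>x. N x \<le> \<beta> * norm x" using N_upper by blast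
  interpret cnf K N e r0 \<alpha> \<beta> using r0 a b by unfold_locales auto
  obtain B0 where B0: "\<And>M t T. M \<in> X \<Longrightarrow> T \<in> prods M t \<Longrightarrow> N (T *v e) \<le> B0 * jsr M ^ t"
    using key_bound[OF assms(4,5)] by blast
  define B where "B = max B0 0"
  have B: "B \<ge> 0" unfolding B_def by simp
  have "\<exists>v. is_norm v \<and> K_monotone K v \<and> extremal M v \<and> ecc N v < 3 * B / (\<alpha> * r0) + 2"
    if M: "M \<in> X" for M
  proof -
    have Mp: "M \<noteq> {}" "compact M" "M \<subseteq> pi_cone K" using P_N_props assms(4) M by auto
    obtain R where R: "\<And>A. A \<in> M \<Longrightarrow> norm A \<le> R" using compact_norm_bound[OF Mp(2)] by blast
    interpret bset M R using Mp(1) R by unfold_locales auto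
    have j0: "jsr M \<ge> 0" by (rule jsr_nonneg)
    have bnd: "N (T *v e) \<le> B * jsr M ^ t" if "T \<in> prods M t" for t T
    proof -
      have "N (T *v e) \<le> B0 * jsr M ^ t" using B0[OF M that] .
      also have "\<dots> \<le> B * jsr M ^ t" unfolding B_def using j0 by (intro mult_right_mono) auto
      finally show ?thesis .
    qed
    show ?thesis by (rule construct[OF Mp(3) B j0 bnd])
  qed
  moreover have "3 * B / (\<alpha> * r0) \<ge> 0" using B a r0 by simp
  hence "3 * B / (\<alpha> * r0) + 2 > 0" by linarith
  ultimately show ?thesis by blast
qed


end
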